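(* Let $G$ be a finite vertex-labeled graph, $r\ge1$, and $v,w$ vertices of $G$ such that: (i) there is a label-preserving graph isomorphism $\varphi$ from $\mathcal S(v;1,2r)$ onto $\mathcal S(w;1,2r)$ satisfying $\mathrm d(w,\varphi(x))=\mathrm d(v,x)$ for every vertex $x$ of $\mathcal S(v;1,2r)$; (ii) $\mathrm d(v,w)>2r$; (iii) the graph $G'$ obtained from $G$ by switching $\mathcal N_1(v)$ and $\mathcal N_1(w)$ is not isomorphic to $G$ (as a labeled graph). Then $G$ and $G'$ have the same multiset of rooted labeled $r$-neighborhoods; in particular $G$ is not identifiable from its $r$-neighborhoods.
   Context: $\mathrm d$ denotes graph distance in $G$. For $t>s>0$, the shell $\mathcal S(v;s,t)$ is the subgraph of $G$ formed by all edges both of whose endpoints have distance from $v$ between $s$ and $t$ inclusive (together with the endpoints of these edges, so it has no isolated vertices). "Switching $\mathcal N_1(v)$ and $\mathcal N_1(w)$" means: $G'$ has the same vertex set as $G$; $v$ and $w$ exchange labels; every neighbor of $v$ that is not a vertex of $\mathcal S(v;1,2r)$ is made adjacent to $w$ instead of $v$, and every neighbor of $w$ that is not a vertex of $\mathcal S(w;1,2r)$ is made adjacent to $v$ instead of $w$; all other edges and labels are unchanged. The $r$-neighborhood $\mathcal N_r(u)$ is the subgraph induced by vertices at distance at most $r$ from $u$, rooted at $u$, with labels, up to root- and label-preserving isomorphism. $G$ is identifiable from its $r$-neighborhoods if every labeled graph on the same number of vertices with the same multiset $\{\mathcal N_r(u)\}$ is isomorphic to $G$. *)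

theory Defs
  imports "HOL-Library.Extended_Nat"
begin

definition lgraph :: "'a set \<Rightarrow> ('a \<Rightarrow> 'a \<Rightarrow> bool) \<Rightarrow> bool" where
  "lgraph V E \<longleftrightarrow> finite V \<and> (\<forall>x y. E x y \<longrightarrow> x \<in> V \<and> y \<in> V)
     \<and> (\<forall>x y. E x y \<longrightarrow> E y x) \<and> (\<forall>x. \<not> E x x)"

fun reach_le :: "('a \<Rightarrow> 'a \<Rightarrow> bool) \<Rightarrow> 'a \<Rightarrow> 'a \<Rightarrow> nat \<Rightarrow> bool" where
  "reach_le E u x 0 = (u = x)"
| "reach_le E u x (Suc n) = (reach_le E u x n \<or> (\<exists>y. reach_le E u y n \<and> E y x))"

definition gdist :: "('a \<Rightarrow> 'a \<Rightarrow> bool) \<Rightarrow> 'a \<Rightarrow> 'a \<Rightarrow> enat" where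
  "gdist E u x = (if \<exists>n. reach_le E u x n then enat (LEAST n. reach_le E u x n) else \<infinity>)"

text \<open>Shell S(v;s,t): edges both of whose endpoints have distance in [s,t] from v,
 together with their endpoints.\<close>
definition shell_edge :: "('a \<Rightarrow> 'a \<Rightarrow> bool) \<Rightarrow> 'a \<Rightarrow> nat \<Rightarrow> nat \<Rightarrow> 'a \<Rightarrow> 'a \<Rightarrow> bool" where
  "shell_edge E v s t x y \<longleftrightarrow> E x y
     \<and> enat s \<le> gdist E v x \<and> gdist E v x \<le> enat t
     \<and> enat s \<le> gdist E v y \<and> gdist E v y \<le> enat t"

definition shell_verts :: "('a \<Rightarrow> 'a \<Rightarrow> bool) \<Rightarrow> 'a \<Rightarrow> nat \<Rightarrow> nat \<Rightarrow> 'a set" where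
  "shell_verts E v s t = {x. \<exists>y. shell_edge E v s t x y}"

definition shell_iso ::
  "('a \<Rightarrow> 'a \<Rightarrow> bool) \<Rightarrow> ('a \<Rightarrow> 'l) \<Rightarrow> nat \<Rightarrow> 'a \<Rightarrow> 'a \<Rightarrow> ('a \<Rightarrow> 'a) \<Rightarrow> bool" where
  "shell_iso E lab r v w \<phi> \<longleftrightarrow>
     bij_betw \<phi> (shell_verts E v 1 (2*r)) (shell_verts E w 1 (2*r))
   \<and> (\<forall>x\<in>shell_verts E v 1 (2*r). \<forall>y\<in>shell_verts E v 1 (2*r).
        shell_edge E v 1 (2*r) x y \<longleftrightarrow> shell_edge E w 1 (2*r) (\<phi> x) (\<phi> y))
   \<and> (\<forall>x\<in>shell_verts E v 1 (2*r). lab (\<phi> x) = lab x)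
   \<and> (\<forall>x\<in>shell_verts E v 1 (2*r). gdist E w (\<phi> x) = gdist E v x)"

text \<open>Neighbours of v that are not vertices of S(v;1,2r) (these get moved).\<close>
definition moved :: "('a \<Rightarrow> 'a \<Rightarrow> bool) \<Rightarrow> nat \<Rightarrow> 'a \<Rightarrow> 'a set" where
  "moved E r v = {p. E v p \<and> p \<notin> shell_verts E v 1 (2*r)}"

definition switch_E :: "('a \<Rightarrow> 'a \<Rightarrow> bool) \<Rightarrow> nat \<Rightarrow> 'a \<Rightarrow> 'a \<Rightarrow> 'a \<Rightarrow> 'a \<Rightarrow> bool" where
  "switch_E E r v w x y \<longleftrightarrow>
     (E x y
       \<and> \<not> (x = v \<and> y \<in> moved E r v) \<and> \<not> (y = v \<and> x \<in> moved E r v)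
       \<and> \<not> (x = w \<and> y \<in> moved E r w) \<and> \<not> (y = w \<and> x \<in> moved E r w))
   \<or> (x = w \<and> y \<in> moved E r v) \<or> (y = w \<and> x \<in> moved E r v)
   \<or> (x = v \<and> y \<in> moved E r w) \<or> (y = v \<and> x \<in> moved E r w)"

definition switch_lab :: "('a \<Rightarrow> 'l) \<Rightarrow> 'a \<Rightarrow> 'a \<Rightarrow> 'a \<Rightarrow> 'l" where
  "switch_lab lab v w = lab(v := lab w, w := lab v)"

definition lgraph_iso ::
  "'a set \<Rightarrow> ('a \<Rightarrow> 'a \<Rightarrow> bool) \<Rightarrow> ('a \<Rightarrow> 'l) \<Rightarrow> 'b set \<Rightarrow> ('b \<Rightarrow> 'b \<Rightarrow> bool) \<Rightarrow> ('b \<Rightarrow> 'l) \<Rightarrow> bool" where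
  "lgraph_iso V E lab V' E' lab' \<longleftrightarrow> (\<exists>f. bij_betw f V V'
     \<and> (\<forall>x\<in>V. \<forall>y\<in>V. E x y \<longleftrightarrow> E' (f x) (f y))
     \<and> (\<forall>x\<in>V. lab' (f x) = lab x))"

definition ball_verts :: "'a set \<Rightarrow> ('a \<Rightarrow> 'a \<Rightarrow> bool) \<Rightarrow> nat \<Rightarrow> 'a \<Rightarrow> 'a set" where
  "ball_verts V E r u = {x\<in>V. gdist E u x \<le> enat r}"

definition nbhd_iso ::
  "'a set \<Rightarrow> ('a \<Rightarrow> 'a \<Rightarrow> bool) \<Rightarrow> ('a \<Rightarrow> 'l) \<Rightarrow> 'b set \<Rightarrow> ('b \<Rightarrow> 'b \<Rightarrow> bool) \<Rightarrow> ('b \<Rightarrow> 'l)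
     \<Rightarrow> nat \<Rightarrow> 'a \<Rightarrow> 'b \<Rightarrow> bool" where
  "nbhd_iso V E lab V' E' lab' r u u' \<longleftrightarrow> (\<exists>f.
     bij_betw f (ball_verts V E r u) (ball_verts V' E' r u') \<and> f u = u'
     \<and> (\<forall>x\<in>ball_verts V E r u. \<forall>y\<in>ball_verts V E r u. E x y \<longleftrightarrow> E' (f x) (f y))
     \<and> (\<forall>x\<in>ball_verts V E r u. lab' (f x) = lab x))"

text \<open>Equality of the multisets of r-neighbourhoods (up to rooted labelled isomorphism):
 a bijection of vertices matching each neighbourhood with an isomorphic one.\<close>
definition same_nbhds ::
  "'a set \<Rightarrow> ('a \<Rightarrow> 'a \<Rightarrow> bool) \<Rightarrow> ('a \<Rightarrow> 'l) \<Rightarrow> 'b set \<Rightarrow> ('b \<Rightarrow> 'b \<Rightarrow> bool) \<Rightarrow> ('b \<Rightarrow> 'l)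
     \<Rightarrow> nat \<Rightarrow> bool" where
  "same_nbhds V E lab V' E' lab' r \<longleftrightarrow> (\<exists>\<sigma>. bij_betw \<sigma> V V'
     \<and> (\<forall>u\<in>V. nbhd_iso V E lab V' E' lab' r u (\<sigma> u)))"

text \<open>Identifiability from r-neighbourhoods (competitor graphs range over graphs
 whose vertices are of the same type).\<close>
definition identifiable :: "'a set \<Rightarrow> ('a \<Rightarrow> 'a \<Rightarrow> bool) \<Rightarrow> ('a \<Rightarrow> 'l) \<Rightarrow> nat \<Rightarrow> bool" where
  "identifiable V E lab r \<longleftrightarrow> (\<forall>V' E' (lab' :: 'a \<Rightarrow> 'l).
     lgraph V' E' \<and> card V' = card V \<and> same_nbhds V E lab V' E' lab' r
       \<longrightarrow> lgraph_iso V E lab V' E' lab')"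

end

theory Submission
  imports Defs
begin



lemma reach_mono: "reach_le E a b m \<Longrightarrow> m \<le> n \<Longrightarrow> reach_le E a b n"
  by (induction n) (auto simp: le_Suc_eq)

lemma reach_trans: "reach_le E a b m \<Longrightarrow> reach_le E b c n \<Longrightarrow> reach_le E a c (m+n)"
  by (induction n arbitrary: c) auto

lemma reach_sym:
  assumes "\<forall>x y. E x y \<longrightarrow> E y x"
  shows "reach_le E a b n \<Longrightarrow> reach_le E b a n"
proof (induction n arbitrary: b)
  case 0 then show ?case by simp
next
  case (Suc n)
  then consider "reach_le E a b n" | y where "reach_le E a y n" "E y b" by auto
  then show ?case
  proof cases
    case 1 then show ?thesis using Suc by simp
  next
    case 2
    have "reach_le E b y (Suc 0)" using 2 assms by auto
    moreover have "reach_le E y a n" using Suc.IH 2 by simp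
    ultimately show ?thesis using reach_trans by fastforce
  qed
qed

lemma gdist_le: "gdist E a b \<le> enat n \<longleftrightarrow> reach_le E a b n"
proof
  assume h: "gdist E a b \<le> enat n"
  show "reach_le E a b n"
  proof (cases "\<exists>k. reach_le E a b k")
    case True
    then have "enat (LEAST k. reach_le E a b k) \<le> enat n" using h by (simp add: gdist_def)
    moreover have "reach_le E a b (LEAST k. reach_le E a b k)" using True by (rule LeastI_ex)
    ultimately show ?thesis using reach_mono by fastforce
  next
    case False then show ?thesis using h by (simp add: gdist_def)
  qed
next
  assume "reach_le E a b n"
  then show "gdist E a b \<le> enat n" unfolding gdist_def by (auto intro: Least_le)
qed

lemma gdist_ge1: "enat 1 \<le> gdist E a b \<longleftrightarrow> a \<noteq> b"
proof -
  have "enat 1 \<le> x \<longleftrightarrow> \<not> x \<le> enat 0" for x :: enat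
    by (cases x) auto
  then show ?thesis using gdist_le[of E a b 0] by simp
qed

lemma gdist_ge1': "enat (Suc 0) \<le> gdist E a b \<longleftrightarrow> a \<noteq> b"
  using gdist_ge1 by simp

lemma reach_back: "reach_le E v x n \<Longrightarrow> x = v \<or> E v x \<or> (\<exists>y. y \<noteq> v \<and> reach_le E v y n \<and> E y x)"
proof (induction n arbitrary: x)
  case 0 then show ?case by simp
next
  case (Suc n)
  then consider "reach_le E v x n" | y where "reach_le E v y n" "E y x" by auto
  then show ?case
  proof cases
    case 1 then have "x = v \<or> E v x \<or> (\<exists>y. y \<noteq> v \<and> reach_le E v y n \<and> E y x)" using Suc.IH by blast
    then show ?thesis by auto
  next
    case 2 then show ?thesis by (cases "y = v") auto
  qed
qed

lemma reach_V: "lgraph V E \<Longrightarrow> v \<in> V \<Longrightarrow> reach_le E v x n \<Longrightarrow> x \<in> V"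
proof (induction n arbitrary: x)
  case 0 then show ?case by simp
next
  case (Suc n)
  then consider "reach_le E v x n" | y where "reach_le E v y n" "E y x" by auto
  then show ?case
  proof cases
    case 1 then show ?thesis using Suc by blast
  next
    case 2 then show ?thesis using Suc.prems unfolding lgraph_def by blast
  qed
qed
lemma reach_Suc_iff: "reach_le E a b (Suc n) \<longleftrightarrow> reach_le E a b n \<or> (\<exists>y. reach_le E a y n \<and> E y b)"
  by simp

lemma nbhd_from_local:
  assumes AV: "A \<subseteq> V" and fAV: "f ` A \<subseteq> V'" and inj: "inj_on f A" and uA: "u \<in> A"
    and IA: "I \<subseteq> A"
    and edges: "\<forall>x\<in>A. \<forall>y\<in>A. E x y \<longleftrightarrow> E' (f x) (f y)"
    and labs: "\<forall>x\<in>A. lab' (f x) = lab x"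
    and intI: "\<forall>x n. n < r \<longrightarrow> reach_le E u x n \<longrightarrow> x \<in> I"
    and cl: "\<forall>x\<in>I. \<forall>y. E x y \<longrightarrow> y \<in> A"
    and cl': "\<forall>x\<in>I. \<forall>y. E' (f x) y \<longrightarrow> y \<in> f ` A"
  shows "nbhd_iso V E lab V' E' lab' r u (f u)"
proof -
  have key: "n \<le> r \<Longrightarrow> (\<forall>x. reach_le E u x n \<longrightarrow> x \<in> A) \<and> (\<forall>y. reach_le E' (f u) y n \<longrightarrow> y \<in> f ` A)
     \<and> (\<forall>x\<in>A. reach_le E u x n \<longleftrightarrow> reach_le E' (f u) (f x) n)" for n
  proof (induction n)
    case 0
    have "\<forall>x\<in>A. (u = x) \<longleftrightarrow> (f u = f x)" using uA inj by (auto simp: inj_on_eq_iff)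
    then show ?case using uA by simp
  next
    case (Suc n)
    then have nr: "n < r" by simp
    from Suc have IH1: "\<And>x. reach_le E u x n \<Longrightarrow> x \<in> A" 
      and IH2: "\<And>y. reach_le E' (f u) y n \<Longrightarrow> y \<in> f ` A"
      and IH3: "\<And>x. x \<in> A \<Longrightarrow> reach_le E u x n \<longleftrightarrow> reach_le E' (f u) (f x) n" by auto
    have inI: "reach_le E u x n \<Longrightarrow> x \<in> I" for x using intI nr by blast
    have 1: "\<forall>x. reach_le E u x (Suc n) \<longrightarrow> x \<in> A"
      unfolding reach_Suc_iff using IH1 inI cl by blast
    have 2: "\<forall>y. reach_le E' (f u) y (Suc n) \<longrightarrow> y \<in> f ` A"
    proof (intro allI impI)
      fix y assume "reach_le E' (f u) y (Suc n)"
      then consider "reach_le E' (f u) y n" | z where "reach_le E' (f u) z n" "E' z y"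
        unfolding reach_Suc_iff by blast
      then show "y \<in> f ` A"
      proof cases
        case 1 then show ?thesis using IH2 by blast
      next
        case 2
        then obtain x where x: "x \<in> A" "z = f x" using IH2 by blast
        then have "reach_le E u x n" using IH3 2 by blast
        then show ?thesis using cl' inI 2 x by blast
      qed
    qed
    have 3: "\<forall>x\<in>A. reach_le E u x (Suc n) \<longleftrightarrow> reach_le E' (f u) (f x) (Suc n)"
    proof
      fix x assume xA: "x \<in> A"
      show "reach_le E u x (Suc n) \<longleftrightarrow> reach_le E' (f u) (f x) (Suc n)"
      proof
        assume "reach_le E u x (Suc n)"
        then consider "reach_le E u x n" | y where "reach_le E u y n" "E y x"
          unfolding reach_Suc_iff by blast
        then show "reach_le E' (f u) (f x) (Suc n)"
        proof cases
          case 1 then show ?thesis using IH3 xA unfolding reach_Suc_iff by blast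
        next
          case 2
          then have yA: "y \<in> A" using IH1 by blast
          then have "reach_le E' (f u) (f y) n" "E' (f y) (f x)" using 2 IH3 edges xA by blast+
          then show ?thesis unfolding reach_Suc_iff by blast
        qed
      next
        assume "reach_le E' (f u) (f x) (Suc n)"
        then consider "reach_le E' (f u) (f x) n" | z where "reach_le E' (f u) z n" "E' z (f x)"
          unfolding reach_Suc_iff by blast
        then show "reach_le E u x (Suc n)"
        proof cases
          case 1 then show ?thesis using IH3 xA unfolding reach_Suc_iff by blast
        next
          case 2
          then obtain y where y: "y \<in> A" "z = f y" using IH2 by blast
          then have "reach_le E u y n" "E y x" using 2 IH3 edges xA by blast+
          then show ?thesis unfolding reach_Suc_iff by blast
        qed
      qed
    qed
    show ?case using 1 2 3 by blast
  qed
  then have K1: "\<And>x. reach_le E u x r \<Longrightarrow> x \<in> A" and K2: "\<And>y. reach_le E' (f u) y r \<Longrightarrow> y \<in> f ` A"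
     and K3: "\<And>x. x \<in> A \<Longrightarrow> reach_le E u x r \<longleftrightarrow> reach_le E' (f u) (f x) r" by blast+
  let ?B = "ball_verts V E r u" and ?B' = "ball_verts V' E' r (f u)"
  have B: "?B = {x\<in>V. reach_le E u x r}" and B': "?B' = {y\<in>V'. reach_le E' (f u) y r}"
    by (auto simp: ball_verts_def gdist_le)
  have BA: "?B \<subseteq> A" using K1 B by blast
  have "f ` ?B = ?B'"
  proof
    show "f ` ?B \<subseteq> ?B'"
    proof
      fix y assume "y \<in> f ` ?B"
      then obtain x where "x \<in> ?B" "y = f x" by blast
      then show "y \<in> ?B'" using K3 B B' BA fAV by blast
    qed
  next
    show "?B' \<subseteq> f ` ?B"
    proof
      fix y assume "y \<in> ?B'"
      then obtain x where "x \<in> A" "y = f x" "reach_le E' (f u) y r" using K2 B' by blast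
      then show "y \<in> f ` ?B" using K3 B AV by blast
    qed
  qed
  then have "bij_betw f ?B ?B'" using inj BA by (auto simp: bij_betw_def intro: inj_on_subset)
  then show ?thesis unfolding nbhd_iso_def using BA edges labs by blast
qed




lemma lg_sym: "lgraph V E \<Longrightarrow> E x y \<Longrightarrow> E y x" by (simp add: lgraph_def)
lemma lg_V: "lgraph V E \<Longrightarrow> E x y \<Longrightarrow> x \<in> V \<and> y \<in> V" by (simp add: lgraph_def)
lemma lg_irr: "lgraph V E \<Longrightarrow> \<not> E x x" by (simp add: lgraph_def)

lemma shell_props:
  assumes "lgraph V E" "x \<in> shell_verts E a 1 (2*r)"
  shows "x \<noteq> a \<and> reach_le E a x (2*r) \<and> x \<in> V"
proof -
  obtain y where "shell_edge E a 1 (2*r) x y" using assms(2) by (auto simp: shell_verts_def)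
  then have "E x y" "enat 1 \<le> gdist E a x" "gdist E a x \<le> enat (2*r)"
    by (auto simp: shell_edge_def)
  then show ?thesis using lg_V[OF assms(1)] by (simp add: gdist_le gdist_ge1')
qed

lemma shell_I:
  assumes "E x y" "x \<noteq> a" "y \<noteq> a" "reach_le E a x (2*r)" "reach_le E a y (2*r)"
  shows "x \<in> shell_verts E a 1 (2*r)"
proof -
  have "shell_edge E a 1 (2*r) x y" unfolding shell_edge_def using assms
    by (simp add: gdist_le gdist_ge1')
  then show ?thesis unfolding shell_verts_def by blast
qed

lemma reach1: "reach_le E a b (Suc 0) \<longleftrightarrow> a = b \<or> E a b" by simp

lemma moved_props:
  assumes g: "lgraph V E" and r: "r \<ge> 1" and p: "p \<in> moved E r a"
  shows "E a p \<and> p \<notin> shell_verts E a 1 (2*r) \<and> (\<forall>y. E p y \<longrightarrow> y = a) \<and> p \<noteq> a \<and> p \<in> V"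
proof -
  have ap: "E a p" and pn: "p \<notin> shell_verts E a 1 (2*r)" using p unfolding moved_def by blast+
  have pa: "p \<noteq> a" using ap lg_irr[OF g] by blast
  have rp: "reach_le E a p (Suc 0)" using ap unfolding reach1 by blast
  have "y = a" if "E p y" for y
  proof (rule ccontr)
    assume ya: "y \<noteq> a"
    have "reach_le E a y (Suc (Suc 0))" unfolding reach_Suc_iff[of E a y "Suc 0"] using rp that by blast
    moreover have "Suc (Suc 0) \<le> 2*r" using r by simp
    ultimately have "reach_le E a y (2*r)" by (rule reach_mono)
    moreover have "reach_le E a p (2*r)" using rp r by (intro reach_mono[of E a p "Suc 0" "2*r"]) auto
    ultimately have "p \<in> shell_verts E a 1 (2*r)" using shell_I[of E p y a r] that pa ya by blast
    then show False using pn by blast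
  qed
  then show ?thesis using ap pn pa lg_V[OF g ap] by blast
qed

lemma nonleaf: "E a y \<Longrightarrow> y \<notin> moved E r a \<Longrightarrow> y \<in> shell_verts E a 1 (2*r)"
  by (simp add: moved_def)

lemma classify:
  assumes "reach_le E a x (2*r)" "\<forall>x y. E x y \<longrightarrow> E y x"
  shows "x = a \<or> x \<in> moved E r a \<or> x \<in> shell_verts E a 1 (2*r)"
proof (cases "x = a")
  case True then show ?thesis by (rule disjI1)
next
  case xa: False
  have "x = a \<or> E a x \<or> (\<exists>y. y \<noteq> a \<and> reach_le E a y (2*r) \<and> E y x)"
    by (rule reach_back[OF assms(1)])
  then have "E a x \<or> (\<exists>y. y \<noteq> a \<and> reach_le E a y (2*r) \<and> E y x)" using xa by simp
  then show ?thesis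
  proof
    assume "E a x" then show ?thesis using nonleaf[of E a x r] by blast
  next
    assume "\<exists>y. y \<noteq> a \<and> reach_le E a y (2*r) \<and> E y x"
    then obtain y where y: "y \<noteq> a" "reach_le E a y (2*r)" "E y x" by blast
    have "E x y" using y(3) assms(2) by blast
    then have "x \<in> shell_verts E a 1 (2*r)" using shell_I[of E x y a r] y(1,2) assms(1) xa by blast
    then show ?thesis by blast
  qed
qed




lemma shell_edge_iff:
  assumes "lgraph V E" "x \<in> shell_verts E a 1 (2*r)" "y \<in> shell_verts E a 1 (2*r)"
  shows "shell_edge E a 1 (2*r) x y \<longleftrightarrow> E x y"
proof -
  have "x \<noteq> a \<and> reach_le E a x (2*r)" "y \<noteq> a \<and> reach_le E a y (2*r)"
    using shell_props[OF assms(1)] assms(2,3) by blast+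
  then show ?thesis unfolding shell_edge_def by (auto simp add: gdist_le gdist_ge1')
qed

locale sw =
  fixes V :: "'a set" and E :: "'a \<Rightarrow> 'a \<Rightarrow> bool" and lab :: "'a \<Rightarrow> 'l"
    and r :: nat and v w :: 'a and \<phi> :: "'a \<Rightarrow> 'a"
  assumes g: "lgraph V E" and r1: "r \<ge> 1" and vV: "v \<in> V" and wV: "w \<in> V"
    and iso: "shell_iso E lab r v w \<phi>" and far: "\<not> reach_le E v w (2*r)"
begin

abbreviation "Sv \<equiv> shell_verts E v 1 (2*r)"
abbreviation "Sw \<equiv> shell_verts E w 1 (2*r)"
abbreviation "E' \<equiv> switch_E E r v w"
abbreviation "lab' \<equiv> switch_lab lab v w"

lemma symE: "E x y \<Longrightarrow> E y x" using lg_sym[OF g] .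
lemma symE_all: "\<forall>x y. E x y \<longrightarrow> E y x" using symE by blast
lemma far': "\<not> reach_le E w v (2*r)" using far reach_sym[OF symE_all] by blast
lemma vw: "v \<noteq> w"
proof
  assume "v = w"
  then have "reach_le E v w 0" by simp
  then have "reach_le E v w (2*r)" by (rule reach_mono) simp
  then show False using far by blast
qed

lemma bij: "bij_betw \<phi> Sv Sw" using iso unfolding shell_iso_def by blast
lemma isoE: "x \<in> Sv \<Longrightarrow> y \<in> Sv \<Longrightarrow> shell_edge E v 1 (2*r) x y \<longleftrightarrow> shell_edge E w 1 (2*r) (\<phi> x) (\<phi> y)"
  using iso unfolding shell_iso_def by blast
lemma isoL: "x \<in> Sv \<Longrightarrow> lab (\<phi> x) = lab x" using iso unfolding shell_iso_def by blast
lemma isoD: "x \<in> Sv \<Longrightarrow> gdist E w (\<phi> x) = gdist E v x" using iso unfolding shell_iso_def by blast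
lemma phiS: "x \<in> Sv \<Longrightarrow> \<phi> x \<in> Sw" using bij bij_betwE by blast
lemma phi_inj: "x \<in> Sv \<Longrightarrow> y \<in> Sv \<Longrightarrow> \<phi> x = \<phi> y \<Longrightarrow> x = y"
  using bij unfolding bij_betw_def inj_on_def by blast
lemma phi_onto: "y \<in> Sw \<Longrightarrow> \<exists>x\<in>Sv. y = \<phi> x"
  using bij unfolding bij_betw_def by blast

lemma Sv_p: "x \<in> Sv \<Longrightarrow> x \<noteq> v \<and> reach_le E v x (2*r) \<and> x \<in> V" using shell_props[OF g] by blast
lemma Sw_p: "x \<in> Sw \<Longrightarrow> x \<noteq> w \<and> reach_le E w x (2*r) \<and> x \<in> V" using shell_props[OF g] by blast
lemma v_Sw: "v \<notin> Sw" using Sw_p far' by blast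
lemma phi_ne: "x \<in> Sv \<Longrightarrow> \<phi> x \<noteq> v \<and> \<phi> x \<noteq> w" using phiS Sw_p v_Sw by blast

lemma mv: "p \<in> moved E r v \<Longrightarrow> E v p \<and> p \<notin> Sv \<and> (\<forall>y. E p y \<longrightarrow> y = v) \<and> p \<noteq> v \<and> p \<in> V"
  by (rule moved_props[OF g r1])
lemma mw: "p \<in> moved E r w \<Longrightarrow> E w p \<and> p \<notin> Sw \<and> (\<forall>y. E p y \<longrightarrow> y = w) \<and> p \<noteq> w \<and> p \<in> V"
  by (rule moved_props[OF g r1])

lemma w_mv: "w \<notin> moved E r v"
proof
  assume "w \<in> moved E r v"
  then have "E v w" using mv by simp
  then have "reach_le E v w (Suc 0)" unfolding reach1 by blast
  then have "reach_le E v w (2*r)" by (rule reach_mono) (use r1 in simp)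
  then show False using far by blast
qed
lemma v_mw: "v \<notin> moved E r w"
proof
  assume "v \<in> moved E r w"
  then have "E w v" using mw by simp
  then have "reach_le E w v (Suc 0)" unfolding reach1 by blast
  then have "reach_le E w v (2*r)" by (rule reach_mono) (use r1 in simp)
  then show False using far' by blast
qed
lemma mv_mw: "p \<in> moved E r v \<Longrightarrow> p \<notin> moved E r w"
proof
  assume a: "p \<in> moved E r v" "p \<in> moved E r w"
  then have "E v p" "E w p" using mv mw by simp_all
  then have "reach_le E v p (Suc 0)" "E p w" using symE unfolding reach1 by blast+
  then have "reach_le E v w (Suc (Suc 0))" unfolding reach_Suc_iff[of E v w "Suc 0"] by blast
  then have "reach_le E v w (2*r)" by (rule reach_mono) (use r1 in simp)
  then show False using far by blast
qed
lemma mv_Sw: "p \<in> moved E r v \<Longrightarrow> p \<notin> Sw"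
proof
  assume a: "p \<in> moved E r v" "p \<in> Sw"
  then obtain y where y: "shell_edge E w 1 (2*r) p y" unfolding shell_verts_def by blast
  then have "E p y" "gdist E w y \<le> enat (2*r)" unfolding shell_edge_def by blast+
  moreover have "\<forall>y. E p y \<longrightarrow> y = v" using mv[OF a(1)] by simp
  ultimately have "y = v" "reach_le E w y (2*r)" using gdist_le[of E w y "2*r"] by blast+
  then show False using far' by blast
qed

lemma v_mv: "v \<notin> moved E r v" using mv by blast
lemma w_mw: "w \<notin> moved E r w" using mw by blast
lemma E'_old: "x \<noteq> v \<Longrightarrow> x \<noteq> w \<Longrightarrow> y \<noteq> v \<Longrightarrow> y \<noteq> w \<Longrightarrow> E' x y \<longleftrightarrow> E x y"
  unfolding switch_E_def by simp
lemma E'_w: "E' w y \<longleftrightarrow> (E w y \<and> y \<notin> moved E r w) \<or> y \<in> moved E r v"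
  unfolding switch_E_def using vw w_mv w_mw by auto
lemma E'_v: "E' v y \<longleftrightarrow> (E v y \<and> y \<notin> moved E r v) \<or> y \<in> moved E r w"
  unfolding switch_E_def using vw v_mw v_mv by auto
lemma E'_sym: "E' x y \<Longrightarrow> E' y x"
  unfolding switch_E_def using symE by auto

end



context sw begin

lemma dist1: "x \<in> Sv \<Longrightarrow> E v x \<longleftrightarrow> E w (\<phi> x)"
proof -
  assume x: "x \<in> Sv"
  have xv: "x \<noteq> v" using Sv_p[OF x] by blast
  have pw: "\<phi> x \<noteq> w" using phi_ne[OF x] by blast
  have "E v x \<longleftrightarrow> reach_le E v x (Suc 0)" using xv unfolding reach1 by blast
  also have "\<dots> \<longleftrightarrow> gdist E v x \<le> enat (Suc 0)" by (rule gdist_le[symmetric])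
  also have "\<dots> \<longleftrightarrow> gdist E w (\<phi> x) \<le> enat (Suc 0)" using isoD[OF x] by simp
  also have "\<dots> \<longleftrightarrow> reach_le E w (\<phi> x) (Suc 0)" by (rule gdist_le)
  also have "\<dots> \<longleftrightarrow> E w (\<phi> x)" using pw unfolding reach1 by blast
  finally show ?thesis .
qed

lemma Sv_E_iff: "x \<in> Sv \<Longrightarrow> y \<in> Sv \<Longrightarrow> E x y \<longleftrightarrow> E (\<phi> x) (\<phi> y)"
  using isoE shell_edge_iff[OF g] phiS by metis

definition fv :: "'a \<Rightarrow> 'a" where
  "fv x = (if x = v then w else if x \<in> Sv then \<phi> x else x)"

lemma fv_v: "fv v = w" by (simp add: fv_def)
lemma fv_p: "p \<in> moved E r v \<Longrightarrow> fv p = p"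
proof -
  assume "p \<in> moved E r v"
  then have "p \<noteq> v" "p \<notin> Sv" using mv by simp_all
  then show ?thesis by (simp add: fv_def)
qed
lemma fv_s: "s \<in> Sv \<Longrightarrow> fv s = \<phi> s"
proof -
  assume "s \<in> Sv"
  then have "s \<noteq> v" using Sv_p by simp
  then show ?thesis using \<open>s \<in> Sv\<close> by (simp add: fv_def)
qed

lemma cls: "reach_le E v x (2*r) \<Longrightarrow> x = v \<or> x \<in> moved E r v \<or> x \<in> Sv"
  by (rule classify[OF _ symE_all])

lemma mv_reach: "p \<in> moved E r v \<Longrightarrow> reach_le E v p (2*r)"
proof -
  assume "p \<in> moved E r v"
  then have "E v p" using mv by simp
  then have "reach_le E v p (Suc 0)" unfolding reach1 by blast
  then show ?thesis by (rule reach_mono) (use r1 in simp)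
qed

lemma edges_fv:
  assumes x: "x = v \<or> x \<in> moved E r v \<or> x \<in> Sv" and y: "y = v \<or> y \<in> moved E r v \<or> y \<in> Sv"
  shows "E x y \<longleftrightarrow> E' (fv x) (fv y)"
proof -
  have vv: "\<not> E v v" "\<not> E' w w" using lg_irr[OF g] E'_w w_mv w_mw by simp_all
  have vp: "E v p" "E' w p" if "p \<in> moved E r v" for p using that mv[OF that] E'_w by simp_all
  have vs: "E v s \<longleftrightarrow> E' w (\<phi> s)" if s: "s \<in> Sv" for s
  proof -
    have "\<phi> s \<notin> moved E r w" using phiS[OF s] mw by blast
    moreover have "\<phi> s \<notin> moved E r v" using phiS[OF s] mv_Sw by blast
    ultimately show ?thesis using E'_w dist1[OF s] by simp
  qed
  have pp: "\<not> E p q" "\<not> E' p q" if "p \<in> moved E r v" "q \<in> moved E r v" for p q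
  proof -
    have m1: "p \<noteq> v" "\<forall>y. E p y \<longrightarrow> y = v" using mv[OF that(1)] by simp_all
    have m2: "q \<noteq> v" using mv[OF that(2)] by simp
    have "p \<noteq> w" "q \<noteq> w" using that w_mv by auto
    moreover have "\<not> E p q" using m1 m2 by blast
    ultimately show "\<not> E p q" "\<not> E' p q" using E'_old m1 m2 by simp_all
  qed
  have ps: "\<not> E p s" "\<not> E' p (\<phi> s)" if "p \<in> moved E r v" "s \<in> Sv" for p s
  proof -
    have m1: "p \<noteq> v" "\<forall>y. E p y \<longrightarrow> y = v" using mv[OF that(1)] by simp_all
    have "p \<noteq> w" using that w_mv by auto
    moreover have "\<phi> s \<noteq> v" "\<phi> s \<noteq> w" using phi_ne[OF that(2)] by simp_all
    moreover have "s \<noteq> v" using Sv_p[OF that(2)] by simp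
    ultimately show "\<not> E p s" "\<not> E' p (\<phi> s)" using E'_old m1 by auto
  qed
  have ss: "E s t \<longleftrightarrow> E' (\<phi> s) (\<phi> t)" if "s \<in> Sv" "t \<in> Sv" for s t
  proof -
    have "\<phi> s \<noteq> v" "\<phi> s \<noteq> w" "\<phi> t \<noteq> v" "\<phi> t \<noteq> w" using phi_ne that by simp_all
    then have "E' (\<phi> s) (\<phi> t) \<longleftrightarrow> E (\<phi> s) (\<phi> t)" by (rule E'_old)
    then show ?thesis using Sv_E_iff[OF that] by simp
  qed
  have symI: "E a b \<longleftrightarrow> E b a" for a b using symE by blast
  have symI': "E' a b \<longleftrightarrow> E' b a" for a b using E'_sym by blast
  from x show ?thesis
  proof (elim disjE)
    assume xv: "x = v"
    from y show ?thesis
    proof (elim disjE)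
      assume "y = v" then show ?thesis using xv vv fv_v by simp
    next
      assume yp: "y \<in> moved E r v" then show ?thesis using xv vp[OF yp] fv_v fv_p[OF yp] by simp
    next
      assume ys: "y \<in> Sv" then show ?thesis using xv vs[OF ys] fv_v fv_s[OF ys] by simp
    qed
  next
    assume xp: "x \<in> moved E r v"
    from y show ?thesis
    proof (elim disjE)
      assume yv: "y = v" then show ?thesis using vp[OF xp] fv_v fv_p[OF xp] symI[of x v] symI'[of x w] by simp
    next
      assume yp: "y \<in> moved E r v" then show ?thesis using pp[OF xp yp] fv_p[OF xp] fv_p[OF yp] by simp
    next
      assume ys: "y \<in> Sv" then show ?thesis using ps[OF xp ys] fv_p[OF xp] fv_s[OF ys] by simp
    qed
  next
    assume xs: "x \<in> Sv"
    from y show ?thesis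
    proof (elim disjE)
      assume yv: "y = v" then show ?thesis using vs[OF xs] fv_v fv_s[OF xs] symI[of x v] symI'[of "\<phi> x" w] by simp
    next
      assume yp: "y \<in> moved E r v" then show ?thesis
        using ps[OF yp xs] fv_p[OF yp] fv_s[OF xs] symI[of x y] symI'[of "\<phi> x" y] by simp
    next
      assume ys: "y \<in> Sv" then show ?thesis using ss[OF xs ys] fv_s[OF xs] fv_s[OF ys] by simp
    qed
  qed
qed

end


context sw begin

lemma two_r': "Suc (2*r - 1) = 2*r" using r1 by simp

lemma clp:
  assumes xI: "reach_le E v x (2*r - 1)" and e: "E' (fv x) y"
  shows "y = w \<or> (\<exists>s\<in>Sv. y = \<phi> s) \<or> y \<in> moved E r v"
proof -
  have "reach_le E v x (2*r)" using reach_mono[OF xI, of "2*r"] by simp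
  then have cx: "x = v \<or> x \<in> moved E r v \<or> x \<in> Sv" by (rule cls)
  then show ?thesis
  proof (elim disjE)
    assume xv: "x = v"
    then have "E' w y" using e fv_v by simp
    then have "(E w y \<and> y \<notin> moved E r w) \<or> y \<in> moved E r v" using E'_w by simp
    then show ?thesis
    proof
      assume "E w y \<and> y \<notin> moved E r w"
      then have "y \<in> Sw" using nonleaf[of E w y r] by simp
      then show ?thesis using phi_onto by simp
    qed simp
  next
    assume p: "x \<in> moved E r v"
    then have E'p: "E' x y" using e fv_p by simp
    have m1: "x \<noteq> v" "\<forall>z. E x z \<longrightarrow> z = v" using mv[OF p] by simp_all
    have xw: "x \<noteq> w" using p w_mv by auto
    show ?thesis
    proof (cases "y = w")
      case True then show ?thesis by simp
    next
      case yw: False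
      show ?thesis
      proof (cases "y = v")
        case True
        then have "E' v x" using E'p E'_sym by simp
        then have "(E v x \<and> x \<notin> moved E r v) \<or> x \<in> moved E r w" using E'_v by simp
        then have False using mv_mw[OF p] p by simp
        then show ?thesis ..
      next
        case yv: False
        have "E' x y \<longleftrightarrow> E x y" using E'_old[OF m1(1) xw yv yw] .
        then have "E x y" using E'p by simp
        then have "y = v" using m1(2) by simp
        then show ?thesis using yv by simp
      qed
    qed
  next
    assume s: "x \<in> Sv"
    then have e2: "E' (\<phi> x) y" using e fv_s by simp
    have pn: "\<phi> x \<noteq> v" "\<phi> x \<noteq> w" using phi_ne[OF s] by simp_all
    have "gdist E v x \<le> enat (2*r - 1)" using xI gdist_le[of E v x "2*r - 1"] by simp
    then have "gdist E w (\<phi> x) \<le> enat (2*r - 1)" using isoD[OF s] by simp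
    then have rw: "reach_le E w (\<phi> x) (2*r - 1)" using gdist_le[of E w "\<phi> x" "2*r - 1"] by simp
    show ?thesis
    proof (cases "y = w")
      case True then show ?thesis by simp
    next
      case yw: False
      show ?thesis
      proof (cases "y = v")
        case True
        then have "E' v (\<phi> x)" using e2 E'_sym by simp
        moreover have "\<phi> x \<notin> moved E r w" using phiS[OF s] mw by blast
        moreover have "\<phi> x \<notin> moved E r v" using phiS[OF s] mv_Sw by blast
        ultimately have "E v (\<phi> x)" using E'_v by simp
        then have "E (\<phi> x) v" by (rule symE)
        then have "reach_le E w v (Suc (2*r - 1))" using rw unfolding reach_Suc_iff by blast
        then have False using far' two_r' by simp
        then show ?thesis ..
      next
        case yv: False
        have "E' (\<phi> x) y \<longleftrightarrow> E (\<phi> x) y" using E'_old[OF pn(1) pn(2) yv yw] .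
        then have Exy: "E (\<phi> x) y" using e2 by simp
        have "reach_le E w y (Suc (2*r - 1))" using rw Exy unfolding reach_Suc_iff by blast
        then have ry: "reach_le E w y (2*r)" using two_r' by simp
        have rx: "reach_le E w (\<phi> x) (2*r)" using Sw_p[OF phiS[OF s]] by simp
        have "y \<in> Sw" using shell_I[of E y "\<phi> x" w r, OF symE[OF Exy] yw pn(2) ry rx] .
        then show ?thesis using phi_onto by simp
      qed
    qed
  qed
qed

lemma fv_inj:
  assumes x: "x = v \<or> x \<in> moved E r v \<or> x \<in> Sv" and y: "y = v \<or> y \<in> moved E r v \<or> y \<in> Sv"
    and e: "fv x = fv y"
  shows "x = y"
proof -
  have d1: "p \<in> moved E r v \<Longrightarrow> p \<noteq> w" for p using w_mv by auto
  have d2: "s \<in> Sv \<Longrightarrow> \<phi> s \<noteq> w" for s using phi_ne by simp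
  have d3: "p \<in> moved E r v \<Longrightarrow> s \<in> Sv \<Longrightarrow> \<phi> s \<noteq> p" for p s
    using mv_Sw phiS by metis
  from x show ?thesis
  proof (elim disjE)
    assume xv: "x = v"
    from y show ?thesis
    proof (elim disjE)
      assume yp: "y \<in> moved E r v" then have False using e xv fv_v fv_p[OF yp] d1[OF yp] by simp
      then show ?thesis ..
    next
      assume ys: "y \<in> Sv" then have False using e xv fv_v fv_s[OF ys] d2[OF ys] by simp
      then show ?thesis ..
    qed (use xv in simp)
  next
    assume xp: "x \<in> moved E r v"
    from y show ?thesis
    proof (elim disjE)
      assume yv: "y = v" then have False using e yv fv_v fv_p[OF xp] d1[OF xp] by simp
      then show ?thesis ..
    next
      assume yp: "y \<in> moved E r v" then show ?thesis using e fv_p[OF xp] fv_p[OF yp] by simp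
    next
      assume ys: "y \<in> Sv" then have False using e fv_p[OF xp] fv_s[OF ys] d3[OF xp ys] by simp
      then show ?thesis ..
    qed
  next
    assume xs: "x \<in> Sv"
    from y show ?thesis
    proof (elim disjE)
      assume yv: "y = v" then have False using e yv fv_v fv_s[OF xs] d2[OF xs] by simp
      then show ?thesis ..
    next
      assume yp: "y \<in> moved E r v" then have False using e fv_p[OF yp] fv_s[OF xs] d3[OF yp xs] by simp
      then show ?thesis ..
    next
      assume ys: "y \<in> Sv" then show ?thesis using e fv_s[OF xs] fv_s[OF ys] phi_inj[OF xs ys] by simp
    qed
  qed
qed

end



context sw begin



lemma case1:
  assumes u: "reach_le E v u r"
  shows "nbhd_iso V E lab V E' lab' r u (fv u)"
proof (rule nbhd_from_local[where A = "{x. reach_le E v x (2*r)}" and I = "{x. reach_le E v x (2*r - 1)}"])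
  let ?A = "{x. reach_le E v x (2*r)}" and ?I = "{x. reach_le E v x (2*r - 1)}"
  have clA: "x \<in> ?A \<Longrightarrow> x = v \<or> x \<in> moved E r v \<or> x \<in> Sv" for x using cls by simp
  show "?A \<subseteq> V" using reach_V[OF g vV] by blast
  show "fv ` ?A \<subseteq> V"
  proof
    fix y assume "y \<in> fv ` ?A"
    then obtain x where x: "x \<in> ?A" "y = fv x" by blast
    from clA[OF x(1)] show "y \<in> V"
    proof (elim disjE)
      assume "x = v" then show ?thesis using x fv_v wV by simp
    next
      assume p: "x \<in> moved E r v" then show ?thesis using x fv_p[OF p] mv[OF p] by simp
    next
      assume s: "x \<in> Sv" then show ?thesis using x fv_s[OF s] Sw_p[OF phiS[OF s]] by simp
    qed
  qed
  have Ik: "x \<in> ?I \<Longrightarrow> x \<in> ?A" for x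
  proof -
    assume "x \<in> ?I"
    then have "reach_le E v x (2*r - 1)" by simp
    then have "reach_le E v x (2*r)" by (rule reach_mono) simp
    then show ?thesis by simp
  qed
  show "inj_on fv ?A"
  proof (rule inj_onI)
    fix x y assume x: "x \<in> ?A" and y: "y \<in> ?A" and e: "fv x = fv y"
    show "x = y" by (rule fv_inj[OF clA[OF x] clA[OF y] e])
  qed
  show "u \<in> ?A" using reach_mono[OF u, of "2*r"] by simp
  show "?I \<subseteq> ?A" using Ik by blast
  show "\<forall>x\<in>?A. \<forall>y\<in>?A. E x y \<longleftrightarrow> E' (fv x) (fv y)"
  proof (intro ballI)
    fix x y assume "x \<in> ?A" "y \<in> ?A"
    then show "E x y \<longleftrightarrow> E' (fv x) (fv y)" by (rule edges_fv[OF clA clA])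
  qed
  show "\<forall>x\<in>?A. lab' (fv x) = lab x"
  proof
    fix x assume x: "x \<in> ?A"
    from clA[OF x] show "lab' (fv x) = lab x"
    proof (elim disjE)
      assume "x = v" then show ?thesis using fv_v vw by (simp add: switch_lab_def)
    next
      assume p: "x \<in> moved E r v"
      have "x \<noteq> v" "x \<noteq> w" using mv[OF p] w_mv p by auto
      then show ?thesis using fv_p[OF p] by (simp add: switch_lab_def)
    next
      assume s: "x \<in> Sv"
      then show ?thesis using fv_s[OF s] phi_ne[OF s] isoL[OF s] by (simp add: switch_lab_def)
    qed
  qed
  show "\<forall>x n. n < r \<longrightarrow> reach_le E u x n \<longrightarrow> x \<in> ?I"
  proof (intro allI impI)
    fix x n assume n: "n < r" and ux: "reach_le E u x n"
    have "reach_le E v x (r + n)" by (rule reach_trans[OF u ux])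
    then have "reach_le E v x (2*r - 1)" by (rule reach_mono) (use n in simp)
    then show "x \<in> ?I" by simp
  qed
  show "\<forall>x\<in>?I. \<forall>y. E x y \<longrightarrow> y \<in> ?A"
  proof (intro ballI allI impI)
    fix x y assume x: "x \<in> ?I" and e: "E x y"
    have "reach_le E v y (Suc (2*r - 1))" using x e unfolding reach_Suc_iff by blast
    then show "y \<in> ?A" using two_r' by simp
  qed
  show "\<forall>x\<in>?I. \<forall>y. E' (fv x) y \<longrightarrow> y \<in> fv ` ?A"
  proof (intro ballI allI impI)
    fix x y assume xI: "x \<in> ?I" and e: "E' (fv x) y"
    have "reach_le E v v 0" by simp
    then have "reach_le E v v (2*r)" by (rule reach_mono) simp
    then have vA: "v \<in> ?A" by simp
    have img_s: "\<phi> s \<in> fv ` ?A" if "s \<in> Sv" for s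
      using image_eqI[of _ fv s, OF fv_s[OF that, symmetric]] Sv_p[OF that] by simp
    have img_w: "w \<in> fv ` ?A" using image_eqI[of _ fv v, OF fv_v[symmetric] vA] .
    have img_p: "p \<in> fv ` ?A" if p: "p \<in> moved E r v" for p
      using image_eqI[of _ fv p, OF fv_p[OF p, symmetric]] mv_reach[OF p] by simp
    have "y = w \<or> (\<exists>s\<in>Sv. y = \<phi> s) \<or> y \<in> moved E r v" using clp xI e by simp
    then show "y \<in> fv ` ?A" using img_s img_w img_p by blast
  qed
qed

end



context sw begin

abbreviation "\<psi> \<equiv> inv_into Sv \<phi>"

lemma psiS: "x \<in> Sw \<Longrightarrow> \<psi> x \<in> Sv" using bij_betwE[OF bij_betw_inv_into[OF bij]] by blast
lemma phipsi: "x \<in> Sw \<Longrightarrow> \<phi> (\<psi> x) = x"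
  using bij unfolding bij_betw_def by (simp add: f_inv_into_f)
lemma psiphi: "x \<in> Sv \<Longrightarrow> \<psi> (\<phi> x) = x"
  using bij unfolding bij_betw_def by (simp add: inv_into_f_f)

lemma swap: "sw V E lab r w v \<psi>"
proof
  show "lgraph V E" by (rule g)
  show "1 \<le> r" by (rule r1)
  show "w \<in> V" by (rule wV)
  show "v \<in> V" by (rule vV)
  show "\<not> reach_le E w v (2 * r)" by (rule far')
  show "shell_iso E lab r w v \<psi>"
    unfolding shell_iso_def
  proof (intro conjI ballI)
    show "bij_betw \<psi> Sw Sv" by (rule bij_betw_inv_into[OF bij])
  next
    fix x y assume x: "x \<in> Sw" and y: "y \<in> Sw"
    show "shell_edge E w 1 (2*r) x y \<longleftrightarrow> shell_edge E v 1 (2*r) (\<psi> x) (\<psi> y)"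
      using isoE[OF psiS[OF x] psiS[OF y]] phipsi[OF x] phipsi[OF y] by simp
  next
    fix x assume x: "x \<in> Sw"
    show "lab (\<psi> x) = lab x" using isoL[OF psiS[OF x]] phipsi[OF x] by simp
    show "gdist E v (\<psi> x) = gdist E w x" using isoD[OF psiS[OF x]] phipsi[OF x] by simp
  qed
qed

lemma near_bad:
  assumes u: "\<not> reach_le E v u r" "\<not> reach_le E w u r" and ux: "reach_le E u x n" and n: "n < r"
    and e: "E x z"
  shows "z \<noteq> v \<and> z \<noteq> w"
proof -
  have "reach_le E u z (Suc n)" using ux e unfolding reach_Suc_iff by blast
  then have "reach_le E z u (Suc n)" by (rule reach_sym[OF symE_all])
  then have "reach_le E z u r" by (rule reach_mono) (use n in simp)
  then show ?thesis using u by blast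
qed

lemma near_ne:
  assumes u: "\<not> reach_le E v u r" "\<not> reach_le E w u r" and ux: "reach_le E u x n" and n: "n \<le> r"
  shows "x \<noteq> v \<and> x \<noteq> w"
proof -
  have "reach_le E x u n" by (rule reach_sym[OF symE_all ux])
  then have "reach_le E x u r" by (rule reach_mono) (use n in simp)
  then show ?thesis using u by blast
qed

lemma case3:
  assumes uV: "u \<in> V" and u: "\<not> reach_le E v u r" "\<not> reach_le E w u r"
  shows "nbhd_iso V E lab V E' lab' r u u"
proof -
  let ?A = "V - {v, w}" and ?I = "{x. \<exists>n<r. reach_le E u x n}"
  have "nbhd_iso V E lab V E' lab' r u ((\<lambda>x. x) u)"
  proof (rule nbhd_from_local[where A = "?A" and I = ?I])
    show "?A \<subseteq> V" by blast
    show "(\<lambda>x. x) ` ?A \<subseteq> V" by blast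
    show "inj_on (\<lambda>x. x) ?A" by simp
    show "u \<in> ?A" using near_ne[OF u, of u 0] uV by simp
    show "?I \<subseteq> ?A"
    proof
      fix x assume "x \<in> ?I"
      then obtain n where n: "n < r" "reach_le E u x n" by blast
      then show "x \<in> ?A" using near_ne[OF u n(2)] reach_V[OF g uV n(2)] by simp
    qed
    show "\<forall>x\<in>?A. \<forall>y\<in>?A. E x y \<longleftrightarrow> E' x y" using E'_old by simp
    show "\<forall>x\<in>?A. lab' x = lab x" by (simp add: switch_lab_def)
    show "\<forall>x n. n < r \<longrightarrow> reach_le E u x n \<longrightarrow> x \<in> ?I" by blast
    show "\<forall>x\<in>?I. \<forall>y. E x y \<longrightarrow> y \<in> ?A"
    proof (intro ballI allI impI)
      fix x y assume "x \<in> ?I" and e: "E x y"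
      then obtain n where n: "n < r" "reach_le E u x n" by blast
      show "y \<in> ?A" using near_bad[OF u n(2) n(1) e] lg_V[OF g e] by simp
    qed
    show "\<forall>x\<in>?I. \<forall>y. E' x y \<longrightarrow> y \<in> (\<lambda>x. x) ` ?A"
    proof (intro ballI allI impI)
      fix x y assume "x \<in> ?I" and e: "E' x y"
      then obtain n where n: "n < r" "reach_le E u x n" by blast
      have xn: "x \<noteq> v" "x \<noteq> w" using near_ne[OF u n(2)] n(1) by simp_all
      have xV: "x \<in> V" using reach_V[OF g uV n(2)] .
      show "y \<in> (\<lambda>x. x) ` ?A"
      proof (cases "y = v \<or> y = w")
        case False
        then have "E x y" using E'_old[OF xn] e by simp
        then show ?thesis using lg_V[OF g] False by simp
      next
        case True
        then show ?thesis
        proof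
          assume yv: "y = v"
          then have "E' v x" using e E'_sym by simp
          then have "E v x \<or> x \<in> moved E r w" using E'_v[of x] by auto
          then have "E x v \<or> E x w" using mw symE by blast
          then show ?thesis using near_bad[OF u n(2) n(1)] by blast
        next
          assume yw: "y = w"
          then have "E' w x" using e E'_sym by simp
          then have "E w x \<or> x \<in> moved E r v" using E'_w[of x] by auto
          then have "E x w \<or> E x v" using mv symE by blast
          then show ?thesis using near_bad[OF u n(2) n(1)] by blast
        qed
      qed
    qed
  qed
  then show ?thesis by simp
qed

lemma E'_lgraph: "lgraph V E'"
  unfolding lgraph_def
proof (intro conjI allI impI)
  show "finite V" using g by (simp add: lgraph_def)
next
  fix x y assume e: "E' x y"
  have mV: "p \<in> moved E r v \<Longrightarrow> p \<in> V" "q \<in> moved E r w \<Longrightarrow> q \<in> V" for p q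
    using mv mw by simp_all
  show "x \<in> V" using e mV vV wV lg_V[OF g] unfolding switch_E_def by blast
  show "y \<in> V" using e mV vV wV lg_V[OF g] unfolding switch_E_def by blast
  show "E' y x" using E'_sym[OF e] .
next
  fix x show "\<not> E' x x"
    using lg_irr[OF g] w_mv v_mw unfolding switch_E_def by blast
qed

lemma cls_r: "reach_le E v u r \<Longrightarrow> u = v \<or> u \<in> moved E r v \<or> u \<in> Sv"
  by (rule cls) (rule reach_mono, assumption, simp)

lemma inv_aux:
  assumes u: "reach_le E v u r" and s: "u \<in> Sv"
  shows "reach_le E w (\<phi> u) r \<and> \<not> reach_le E v (\<phi> u) r"
proof
  have "gdist E v u \<le> enat r" using u gdist_le[of E v u r] by simp
  then have "gdist E w (\<phi> u) \<le> enat r" using isoD[OF s] by simp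
  then show rw: "reach_le E w (\<phi> u) r" using gdist_le[of E w "\<phi> u" r] by simp
  show "\<not> reach_le E v (\<phi> u) r"
  proof
    assume "reach_le E v (\<phi> u) r"
    moreover have "reach_le E (\<phi> u) w r" by (rule reach_sym[OF symE_all rw])
    ultimately have "reach_le E v w (r + r)" by (rule reach_trans)
    then show False using far by (simp add: mult_2)
  qed
qed

lemma fvV: "reach_le E v u r \<Longrightarrow> fv u \<in> V"
proof -
  assume u: "reach_le E v u r"
  from cls_r[OF u] show ?thesis
  proof (elim disjE)
    assume "u = v" then show ?thesis using fv_v wV by simp
  next
    assume p: "u \<in> moved E r v" then show ?thesis using fv_p[OF p] mv[OF p] by simp
  next
    assume s: "u \<in> Sv" then show ?thesis using fv_s[OF s] Sw_p[OF phiS[OF s]] by simp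
  qed
qed

end



theorem lemma2p1:
  fixes V :: "'a set" and E :: "'a \<Rightarrow> 'a \<Rightarrow> bool" and lab :: "'a \<Rightarrow> 'l"
    and r :: nat and v w :: 'a and \<phi> :: "'a \<Rightarrow> 'a"
  assumes "lgraph V E"
    and "r \<ge> 1"
    and "v \<in> V" and "w \<in> V"
    and "shell_iso E lab r v w \<phi>"
    and "gdist E v w > enat (2 * r)"
    and "\<not> lgraph_iso V E lab V (switch_E E r v w) (switch_lab lab v w)"
  shows "same_nbhds V E lab V (switch_E E r v w) (switch_lab lab v w) r
         \<and> \<not> identifiable V E lab r"
proof -
  have "\<not> gdist E v w \<le> enat (2*r)" using assms(6) leD by blast
  then have far: "\<not> reach_le E v w (2*r)" using gdist_le[of E v w "2*r"] by simp
  interpret A: sw V E lab r v w \<phi> using assms(1-5) far by unfold_locales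
  interpret B: sw V E lab r w v "inv_into (shell_verts E v 1 (2*r)) \<phi>" by (rule A.swap)
  have sE: "switch_E E r w v = switch_E E r v w"
    by (intro ext) (unfold switch_E_def, blast)
  have sL: "switch_lab lab w v = switch_lab lab v w"
    using A.vw by (simp add: switch_lab_def fun_upd_twist)
  define \<sigma> where "\<sigma> u = (if reach_le E v u r then A.fv u else if reach_le E w u r then B.fv u else u)" for u
  have vr: "reach_le E v v r" using reach_mono[of E v v 0 r] by simp
  have wr: "reach_le E w w r" using reach_mono[of E w w 0 r] by simp
  have nvw: "\<not> reach_le E v w r" using far reach_mono[of E v w r "2*r"] by auto
  have nwv: "\<not> reach_le E w v r" using B.far reach_mono[of E w v r "2*r"] by auto
  have sv: "\<sigma> v = w" using vr A.fv_v by (simp add: \<sigma>_def)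
  have sw': "\<sigma> w = v" using wr nvw B.fv_v by (simp add: \<sigma>_def)
  have invol: "\<sigma> (\<sigma> u) = u \<and> \<sigma> u \<in> V" if uV: "u \<in> V" for u
  proof (cases "reach_le E v u r")
    case rv: True
    then have su: "\<sigma> u = A.fv u" by (simp add: \<sigma>_def)
    have "\<sigma> u \<in> V" using su A.fvV[OF rv] by simp
    moreover have "\<sigma> (\<sigma> u) = u"
      using A.cls_r[OF rv]
    proof (elim disjE)
      assume "u = v" then show ?thesis using sv sw' by simp
    next
      assume p: "u \<in> moved E r v" then show ?thesis using su A.fv_p[OF p] by simp
    next
      assume s: "u \<in> shell_verts E v 1 (2*r)"
      have a: "reach_le E w (\<phi> u) r" "\<not> reach_le E v (\<phi> u) r" using A.inv_aux[OF rv s] by simp_all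
      have "\<sigma> (\<phi> u) = B.fv (\<phi> u)" using a by (simp add: \<sigma>_def)
      also have "\<dots> = A.\<psi> (\<phi> u)" by (rule B.fv_s[OF A.phiS[OF s]])
      also have "\<dots> = u" by (rule A.psiphi[OF s])
      finally show ?thesis using su A.fv_s[OF s] by simp
    qed
    ultimately show ?thesis by simp
  next
    case nv: False
    show ?thesis
    proof (cases "reach_le E w u r")
      case rw: True
      then have su: "\<sigma> u = B.fv u" using nv by (simp add: \<sigma>_def)
      have "\<sigma> u \<in> V" using su B.fvV[OF rw] by simp
      moreover have "\<sigma> (\<sigma> u) = u"
        using B.cls_r[OF rw]
      proof (elim disjE)
        assume "u = w" then show ?thesis using sv sw' su B.fv_v by simp
      next
        assume p: "u \<in> moved E r w" then show ?thesis using su B.fv_p[OF p] by simp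
      next
        assume s: "u \<in> shell_verts E w 1 (2*r)"
        have a: "reach_le E v (A.\<psi> u) r" "\<not> reach_le E w (A.\<psi> u) r" using B.inv_aux[OF rw s] by simp_all
        have "\<sigma> (A.\<psi> u) = A.fv (A.\<psi> u)" using a by (simp add: \<sigma>_def)
        also have "\<dots> = \<phi> (A.\<psi> u)" by (rule A.fv_s[OF A.psiS[OF s]])
        also have "\<dots> = u" by (rule A.phipsi[OF s])
        finally show ?thesis using su B.fv_s[OF s] by simp
      qed
      ultimately show ?thesis by simp
    next
      case nw: False
      then show ?thesis using nv uV by (simp add: \<sigma>_def)
    qed
  qed
  have bij: "bij_betw \<sigma> V V"
    by (rule bij_betw_byWitness[where f' = \<sigma>]) (use invol in auto)
  have nb: "nbhd_iso V E lab V (switch_E E r v w) (switch_lab lab v w) r u (\<sigma> u)" if uV: "u \<in> V" for u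
  proof (cases "reach_le E v u r")
    case True
    then show ?thesis using A.case1[OF True] by (simp add: \<sigma>_def)
  next
    case nv: False
    show ?thesis
    proof (cases "reach_le E w u r")
      case True
      then show ?thesis using B.case1[OF True] nv sE sL by (simp add: \<sigma>_def)
    next
      case False
      then show ?thesis using A.case3[OF uV nv False] nv by (simp add: \<sigma>_def)
    qed
  qed
  have same: "same_nbhds V E lab V (switch_E E r v w) (switch_lab lab v w) r"
    unfolding same_nbhds_def using bij nb by blast
  have "\<not> identifiable V E lab r"
    unfolding identifiable_def using A.E'_lgraph same assms(7) by blast
  then show ?thesis using same by blast
qed


end
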